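(* There is an absolute constant $c>0$ such that the following holds. Let $G=K_n$ with $n\ge 2$, let $F$ be a regular distribution, and let $p=F^{-1}(1-1/n)\cdot(1-1/n)^{n-1}$. Then $$\inf_{\mathbf{T}\in\mathcal{N}_{p\cdot\mathbf{1}}}\mathcal{R}(p\cdot\mathbf{1},\mathbf{T})\ \ge\ c\cdot\sup_{\mathbf{p}'\in(0,\infty)^n}\ \sup_{\mathbf{T}\in\mathcal{N}_{\mathbf{p}'}}\mathcal{R}(\mathbf{p}',\mathbf{T}),$$ i.e. the worst equilibrium revenue at the uniform price $p$ is a constant fraction of the best equilibrium revenue over all (possibly non-uniform) price vectors.
   Context: Public-goods pricing game: $n$ buyers are the vertices of an undirected graph $G=([n],E)$, here the complete graph $K_n$; $N(i)=\{j:(i,j)\in E\}$ (so $i\notin N(i)$). Values $v_i$ are i.i.d. with cumulative distribution function $F$ on $[0,\infty)$, $F(\infty)=1$. An equilibrium for price vector $\mathbf{p}$ is a threshold vector $\mathbf{T}\in[0,\infty]^n$ (buyer $i$ purchases iff $v_i\ge T_i$) with $T_i=p_i/\prod_{j\in N(i)}F(T_j)$ for all $i$ (convention $c/0=\infty$); $\mathcal{N}_{\mathbf{p}}$ is the set of equilibria; $\mathcal{R}(\mathbf{p},\mathbf{T})=\sum_ip_i(1-F(T_i))$; $p\cdot\mathbf{1}$ is the uniform price vector. $F$ is regular: it is atomless, supported on an interval in $[0,\infty)$ with a density $f$ positive there, and the virtual value $\phi(x)=x-\frac{1-F(x)}{f(x)}$ is non-decreasing. $F^{-1}(q)=\min\{x: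 F(x)=q\}$. *)

theory Defs
  imports "HOL-Analysis.Analysis"
begin

text \<open>Buyers are 0,...,n-1; the graph is the complete graph K_n, so N(i) = {j < n. j \<noteq> i}.\<close>

definition nbrs :: "nat \<Rightarrow> nat \<Rightarrow> nat set" where
  "nbrs n i = {j. j < n \<and> j \<noteq> i}"

definition Fe :: "(real \<Rightarrow> real) \<Rightarrow> ereal \<Rightarrow> real" where
  "Fe F t = (if t = \<infinity> then 1 else F (real_of_ereal t))"

definition virtual_value :: "(real \<Rightarrow> real) \<Rightarrow> (real \<Rightarrow> real) \<Rightarrow> real \<Rightarrow> real" where
  "virtual_value F f x = x - (1 - F x) / f x"

definition regular :: "(real \<Rightarrow> real) \<Rightarrow> bool" where
  "regular F \<longleftrightarrow> mono F \<and> continuous_on UNIV F \<and> (F \<longlongrightarrow> 1) at_top \<and>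
     (\<exists>f a (b::ereal). 0 \<le> a \<and> ereal a < b \<and>
        (\<forall>x. x \<le> a \<longrightarrow> F x = 0) \<and>
        (\<forall>x. b \<le> ereal x \<longrightarrow> F x = 1) \<and>
        (\<forall>x. a < x \<and> ereal x < b \<longrightarrow> (F has_real_derivative f x) (at x) \<and> f x > 0) \<and>
        (\<forall>x y. a < x \<and> x \<le> y \<and> ereal y < b \<longrightarrow> virtual_value F f x \<le> virtual_value F f y))"

definition Finv :: "(real \<Rightarrow> real) \<Rightarrow> real \<Rightarrow> real" where
  "Finv F q = (LEAST x. F x = q)"

definition equilibria :: "nat \<Rightarrow> (real \<Rightarrow> real) \<Rightarrow> (nat \<Rightarrow> real) \<Rightarrow> (nat \<Rightarrow> ereal) set" where
  "equilibria n F p = {T. \<forall>i<n. 0 \<le> T i \<and>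
      T i = (let d = (\<Prod>j\<in>nbrs n i. Fe F (T j)) in
             if d = 0 then \<infinity> else ereal (p i / d))}"

definition revenue :: "nat \<Rightarrow> (real \<Rightarrow> real) \<Rightarrow> (nat \<Rightarrow> real) \<Rightarrow> (nat \<Rightarrow> ereal) \<Rightarrow> real" where
  "revenue n F p T = (\<Sum>i<n. p i * (1 - Fe F (T i)))"

end

theory Submission imports Defs begin

lemma g_deriv:
  assumes "(F has_real_derivative f t) (at t)" "f t > 0"
  shows "((\<lambda>s. (1 - F s) * (c - s)) has_real_derivative f t * (virtual_value F f t - c)) (at t)"
proof -
  have "((\<lambda>s. (1 - F s) * (c - s)) has_real_derivative (- f t) * (c - t) + (1 - F t) * (- 1)) (at t)"
    by (auto intro!: derivative_eq_intros assms(1))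
  moreover have "(- f t) * (c - t) + (1 - F t) * (- 1) = f t * (virtual_value F f t - c)"
    using assms(2) by (simp add: virtual_value_def field_simps)
  ultimately show ?thesis by simp
qed

lemma rev_bound:
  fixes F f :: "real \<Rightarrow> real" and a x T :: real and b :: ereal
  assumes mono: "mono F" and cont: "continuous_on UNIV F"
    and a0: "0 \<le> a" and Fa: "\<forall>x. x \<le> a \<longrightarrow> F x = 0"
    and Fb: "\<forall>x. b \<le> ereal x \<longrightarrow> F x = 1"
    and le1: "\<forall>y. F y \<le> 1"
    and der: "\<forall>x. a < x \<and> ereal x < b \<longrightarrow> (F has_real_derivative f x) (at x) \<and> f x > 0"
    and vv: "\<forall>x y. a < x \<and> x \<le> y \<and> ereal y < b \<longrightarrow> virtual_value F f x \<le> virtual_value F f y"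
    and ax: "a < x" and xb: "ereal x < b" and half: "1 - F x \<le> F x" and xT: "x \<le> T"
  shows "T * (1 - F T) \<le> 2 * (x * (1 - F x))"
proof -
  define c where "c = virtual_value F f x"
  define g where "g = (\<lambda>s. (1 - F s) * (c - s))"
  have x0: "0 < x" using ax a0 by simp
  have gcont: "continuous_on A g" for A
    unfolding g_def by (intro continuous_intros continuous_on_subset[OF cont]) auto
  have S0: "0 \<le> 1 - F x" using le1 by (simp)
  show ?thesis
  proof (cases "b \<le> ereal T")
    case True then show ?thesis using Fb x0 S0 by simp
  next
    case False
    then have Tb: "ereal T < b" by simp
    have A: "g x \<le> g T"
    proof (rule DERIV_nonneg_imp_increasing_open[OF xT _ gcont])
      fix t assume t: "x < t" "t < T"
      have tb: "ereal t < b" using t Tb by (meson ereal_less_eq(3) le_less_trans less_imp_le)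
      have "a < t" using t ax by simp
      then have d: "(F has_real_derivative f t) (at t)" "f t > 0" using der tb by auto
      have "c \<le> virtual_value F f t" unfolding c_def using vv ax t tb by auto
      then show "\<exists>y. (g has_real_derivative y) (at t) \<and> 0 \<le> y"
        unfolding g_def using g_deriv[of F f t c, OF d] d(2) by (intro exI[of _ "f t * (virtual_value F f t - c)"]) auto
    qed
    have B: "g a \<ge> g x"
    proof (rule DERIV_nonpos_imp_decreasing_open[OF _ _ gcont])
      show "a \<le> x" using ax by simp
      fix t assume t: "a < t" "t < x"
      have tb: "ereal t < b" using t xb by (meson ereal_less_eq(3) le_less_trans less_imp_le)
      have d: "(F has_real_derivative f t) (at t)" "f t > 0" using der tb t by auto
      have "virtual_value F f t \<le> c" unfolding c_def using vv t xb by auto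
      then show "\<exists>y. (g has_real_derivative y) (at t) \<and> y \<le> 0"
        unfolding g_def using g_deriv[of F f t c, OF d] d(2)
        by (intro exI[of _ "f t * (virtual_value F f t - c)"]) (auto simp: mult_le_0_iff)
    qed
    define S where "S = 1 - F x"
    define ST where "ST = 1 - F T"
    have ST0: "0 \<le> ST" using le1 unfolding ST_def by simp
    have STS: "ST \<le> S" unfolding ST_def S_def using mono xT by (simp add: monoD)
    have A': "ST * T \<le> S * x - c * (S - ST)" using A unfolding g_def S_def ST_def by (simp add: algebra_simps)
    have B': "- c * (1 - S) \<le> S * x" using B Fa a0 unfolding g_def S_def by (simp add: algebra_simps)
    have h: "S \<le> 1 - S" using half unfolding S_def by simp
    have "- c * (S - ST) \<le> S * x"
    proof (cases "c \<ge> 0")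
      case True
      have "0 \<le> c * (S - ST)" using True STS by simp
      moreover have "0 \<le> S * x" using S0 x0 unfolding S_def by simp
      ultimately show ?thesis by linarith
    next
      case False
      then have "- c * (S - ST) \<le> - c * S" using ST0 by (simp add: mult_left_mono)
      also have "\<dots> \<le> - c * (1 - S)" using False h by (simp add: mult_left_mono)
      finally show ?thesis using B' by simp
    qed
    then show ?thesis using A' unfolding S_def ST_def by (simp add: algebra_simps)
  qed
qed
lemma weier:
  fixes q :: "nat \<Rightarrow> real"
  shows "finite A \<Longrightarrow> (\<And>i. i\<in>A \<Longrightarrow> 0 \<le> q i \<and> q i \<le> 1) \<Longrightarrow> 1 - (\<Sum>i\<in>A. 1 - q i) \<le> (\<Prod>i\<in>A. q i)"
proof (induction A rule: finite_induct)
  case empty then show ?case by simp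
next
  case (insert k A)
  have IH: "1 - (\<Sum>i\<in>A. 1 - q i) \<le> (\<Prod>i\<in>A. q i)" using insert by auto
  have qk: "0 \<le> q k" "q k \<le> 1" using insert by auto
  have S0: "0 \<le> (\<Sum>i\<in>A. 1 - q i)" using insert by (intro sum_nonneg) auto
  have "q k * (1 - (\<Sum>i\<in>A. 1 - q i)) \<le> q k * (\<Prod>i\<in>A. q i)" using IH qk by (simp add: mult_left_mono)
  moreover have "q k * (\<Sum>i\<in>A. 1 - q i) \<le> (\<Sum>i\<in>A. 1 - q i)" using qk S0 by (simp add: mult_left_le_one_le)
  ultimately show ?case using insert by (simp add: algebra_simps)
qed

lemma excl:
  fixes q :: "nat \<Rightarrow> real"
  shows "finite A \<Longrightarrow> (\<And>i. i\<in>A \<Longrightarrow> 0 \<le> q i \<and> q i \<le> 1) \<Longrightarrow>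
    (\<Sum>i\<in>A. (1 - q i) * (\<Prod>j\<in>A-{i}. q j)) \<le> 1 - (\<Prod>i\<in>A. q i)"
proof (induction A rule: finite_induct)
  case empty then show ?case by simp
next
  case (insert k A)
  define E where "E = (\<Sum>i\<in>A. (1 - q i) * (\<Prod>j\<in>A-{i}. q j))"
  define P where "P = (\<Prod>i\<in>A. q i)"
  have IH: "E \<le> 1 - P" using insert unfolding E_def P_def by auto
  have qk: "0 \<le> q k" "q k \<le> 1" using insert by auto
  have P1: "P \<le> 1" unfolding P_def using insert by (intro prod_le_1) auto
  have eq1: "(\<Sum>i\<in>A. (1 - q i) * (\<Prod>j\<in>insert k A-{i}. q j)) = q k * E"
    unfolding E_def sum_distrib_left
  proof (rule sum.cong)
    fix i assume i: "i \<in> A"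
    then have "insert k A - {i} = insert k (A - {i})" using insert by auto
    then have "(\<Prod>j\<in>insert k A-{i}. q j) = q k * (\<Prod>j\<in>A-{i}. q j)" using insert by simp
    then show "(1 - q i) * (\<Prod>j\<in>insert k A-{i}. q j) = q k * ((1 - q i) * (\<Prod>j\<in>A-{i}. q j))" by simp
  qed simp
  have "insert k A - {k} = A" using insert by auto
  then have "(\<Sum>i\<in>insert k A. (1 - q i) * (\<Prod>j\<in>insert k A-{i}. q j)) = (1 - q k) * P + q k * E"
    using insert eq1 unfolding P_def by simp
  also have "\<dots> \<le> (1 - q k) * P + q k * (1 - P)" using IH qk by (simp add: mult_left_mono)
  also have "\<dots> \<le> 1 - q k * P"
  proof -
    have "0 \<le> (1 - q k) * (1 - P)" using qk P1 by simp
    then show ?thesis by (simp add: algebra_simps)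
  qed
  finally show ?case using insert unfolding P_def by simp
qed

lemma factor_bounds:
  assumes "n \<ge> (2::nat)"
  shows "(1 - 1 / real n) ^ (n - 1) \<le> 1/2" "1/3 \<le> (1 - 1 / real n) ^ (n - 1)"
proof -
  define m where "m = n - 1"
  have m1: "m \<ge> 1" and nm: "real n = real m + 1" using assms unfolding m_def by auto
  have eq: "1 - 1 / real n = 1 / (1 + 1 / real m)" using m1 nm by (simp add: field_simps)
  have pos: "0 < (1 + 1 / real m) ^ m" by (intro zero_less_power) (simp add: add_pos_nonneg)
  have "1 + real m * (1 / real m) \<le> (1 + 1 / real m) ^ m" by (rule Bernoulli_inequality) (smt (verit) of_nat_0_le_iff divide_nonneg_nonneg)
  then have B: "2 \<le> (1 + 1 / real m) ^ m" using m1 by simp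
  have "(1 + 1 / real m) ^ m \<le> exp (1 / real m) ^ m"
    by (rule power_mono) (auto simp del: exp_ge_add_one_self intro: exp_ge_add_one_self[of "1 / real m", simplified add.commute])
  also have "\<dots> = exp 1"
  proof -
    have "real m * (1 / real m) = 1" using m1 by simp
    then show ?thesis by (metis exp_of_nat_mult)
  qed
  also have "\<dots> \<le> 3" by (rule exp_le)
  finally have C: "(1 + 1 / real m) ^ m \<le> 3" .
  have fe: "(1 - 1 / real n) ^ (n - 1) = 1 / (1 + 1 / real m) ^ m"
    unfolding eq m_def[symmetric] by (simp add: power_one_over)
  show "(1 - 1 / real n) ^ (n - 1) \<le> 1/2" unfolding fe using B pos by (simp add: field_simps)
  show "1/3 \<le> (1 - 1 / real n) ^ (n - 1)" unfolding fe using C pos by (simp add: field_simps)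
qed

lemma nbrs_eq: "nbrs n i = {..<n} - {i}" unfolding nbrs_def by auto

lemma main_bound:
  assumes n2: "n \<ge> 2" and reg: "regular F"
  defines "x \<equiv> Finv F (1 - 1 / real n)"
  shows "(INF T\<in>equilibria n F (\<lambda>_. x * (1 - 1 / real n) ^ (n - 1)).
             ereal (revenue n F (\<lambda>_. x * (1 - 1 / real n) ^ (n - 1)) T))
          \<ge> ereal (x * (1 - 1 / real n) ^ (n - 1) / 2)"
    "(SUP p'\<in>{p'. \<forall>i<n. p' i > 0}. SUP T\<in>equilibria n F p'. ereal (revenue n F p' T))
          \<le> ereal (3 * x)"
    "x > 0"
proof -
  obtain f a b where mono: "mono F" and cont: "continuous_on UNIV F" and lim: "(F \<longlongrightarrow> 1) at_top"
    and a0: "0 \<le> a" and ab: "ereal a < b" and Fa: "\<forall>x. x \<le> a \<longrightarrow> F x = 0"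
    and Fb: "\<forall>x. b \<le> ereal x \<longrightarrow> F x = 1"
    and der: "\<forall>x. a < x \<and> ereal x < b \<longrightarrow> (F has_real_derivative f x) (at x) \<and> f x > 0"
    and vv: "\<forall>x y. a < x \<and> x \<le> y \<and> ereal y < b \<longrightarrow> virtual_value F f x \<le> virtual_value F f y"
    using reg unfolding regular_def by blast
  have le1: "\<forall>y. F y \<le> 1"
  proof
    fix y
    have "eventually (\<lambda>z. F y \<le> F z) at_top"
      unfolding eventually_at_top_linorder using mono by (auto intro: monoD)
    then show "F y \<le> 1" using tendsto_lowerbound[OF lim] by simp
  qed
  have ge0: "\<forall>y. 0 \<le> F y"
  proof
    fix y show "0 \<le> F y"
    proof (cases "y \<le> a")
      case True then show ?thesis using Fa by simp
    next
      case False then have "F a \<le> F y" using mono by (simp add: monoD)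
      then show ?thesis using Fa by simp
    qed
  qed
  define v where "v = 1 - 1 / real n"
  have v: "1/2 \<le> v" "v < 1" using n2 unfolding v_def by (auto simp: field_simps)
  have "eventually (\<lambda>z. F z > v) at_top" using lim v by (simp add: order_tendstoD)
  then obtain y0 where y0: "\<And>z. z \<ge> y0 \<Longrightarrow> F z > v" unfolding eventually_at_top_linorder by blast
  define y1 where "y1 = max y0 a"
  have "\<exists>z. a \<le> z \<and> z \<le> y1 \<and> F z = v"
    by (rule IVT') (use Fa v y0 continuous_on_subset[OF cont] in \<open>auto simp: y1_def less_imp_le\<close>)
  then obtain z where z: "F z = v" by blast
  have zin: "a < z \<and> ereal z < b" if "F z = v" for z
  proof
    show "a < z" by (cases "z \<le> a") (use Fa v that in auto)
    show "ereal z < b" by (cases "b \<le> ereal z") (use Fb v that in auto)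
  qed
  have strict: "F w < F u" if "a < w" "w < u" "ereal u < b" for w u
  proof (rule DERIV_pos_imp_increasing_open[OF that(2) _ continuous_on_subset[OF cont]])
    fix t assume t: "w < t" "t < u"
    have "ereal t < b" using t that(3) by (meson ereal_less_eq(3) le_less_trans less_imp_le)
    moreover have "a < t" using t that(1) by simp
    ultimately have "(F has_real_derivative f t) (at t) \<and> 0 < f t" using der by blast
    then show "\<exists>y. (F has_real_derivative y) (at t) \<and> 0 < y" by blast
  qed simp
  have xz: "x = z" unfolding x_def Finv_def v_def[symmetric]
  proof (rule Least_equality)
    show "F z = v" by (rule z)
    fix w assume w: "F w = v"
    show "z \<le> w"
    proof (rule ccontr)
      assume "\<not> z \<le> w"
      then have "F w < F z" using strict zin[OF w] zin[OF z] by auto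
      then show False using w z by simp
    qed
  qed
  have Fx: "F x = v" and ax: "a < x" and xb: "ereal x < b" using xz z zin[OF z] by auto
  show x0: "x > 0" using ax a0 by simp
  define k where "k = (1 - 1 / real n) ^ (n - 1)"
  have k: "k \<le> 1/2" "1/3 \<le> k" using factor_bounds[OF n2] unfolding k_def by auto
  define p where "p = x * k"
  have p0: "p > 0" using x0 k unfolding p_def by simp
  have q01: "0 \<le> Fe F t \<and> Fe F t \<le> 1" for t using ge0 le1 unfolding Fe_def by auto
  have n0: "real n > 0" using n2 by simp
  show "(INF T\<in>equilibria n F (\<lambda>_. x * (1 - 1 / real n) ^ (n - 1)).
             ereal (revenue n F (\<lambda>_. x * (1 - 1 / real n) ^ (n - 1)) T))
          \<ge> ereal (x * (1 - 1 / real n) ^ (n - 1) / 2)"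
    unfolding k_def[symmetric] p_def[symmetric]
  proof (rule INF_greatest)
    fix T assume T: "T \<in> equilibria n F (\<lambda>_. p)"
    define q where "q i = Fe F (T i)" for i
    have q: "0 \<le> q i \<and> q i \<le> 1" for i unfolding q_def using q01 by auto
    define \<Sigma> where "\<Sigma> = (\<Sum>i<n. 1 - q i)"
    have rev: "revenue n F (\<lambda>_. p) T = p * \<Sigma>"
      unfolding revenue_def \<Sigma>_def q_def by (simp add: sum_distrib_left)
    have "\<Sigma> \<ge> 1/2"
    proof (rule ccontr)
      assume small: "\<not> \<Sigma> \<ge> 1/2"
      have "1 / real n \<le> 1 - q i" if i: "i < n" for i
      proof -
        define D where "D = (\<Prod>j\<in>nbrs n i. Fe F (T j))"
        have "1 - (\<Sum>j\<in>nbrs n i. 1 - q j) \<le> D"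
          unfolding D_def q_def[symmetric] nbrs_eq by (rule weier) (use q in auto)
        moreover have "(\<Sum>j\<in>nbrs n i. 1 - q j) \<le> \<Sigma>"
          unfolding \<Sigma>_def nbrs_eq by (rule sum_mono2) (use q in auto)
        ultimately have D: "D > 1/2" using small by simp
        have eqT: "T i = (let d = (\<Prod>j\<in>nbrs n i. Fe F (T j)) in if d = 0 then \<infinity> else ereal (p / d))"
          using T i unfolding equilibria_def by blast
        have Ti: "T i = ereal (p / D)" using eqT D unfolding D_def[symmetric] Let_def by simp
        have "p / D \<le> 2 * p" using D p0 by (simp add: field_simps)
        also have "\<dots> \<le> x" using k x0 unfolding p_def by (simp add: mult_left_le)
        finally have "F (p / D) \<le> F x" using mono by (simp add: monoD)
        then have "q i \<le> v" unfolding q_def Ti Fe_def using Fx by simp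
        then show ?thesis unfolding v_def by simp
      qed
      then have "(\<Sum>i<n. 1 / real n) \<le> \<Sigma>" unfolding \<Sigma>_def by (intro sum_mono) auto
      then have "1 \<le> \<Sigma>" using n0 by simp
      then show False using small by simp
    qed
    then have "p / 2 \<le> p * \<Sigma>" using p0 by (simp add: field_simps)
    then show "ereal (p / 2) \<le> ereal (revenue n F (\<lambda>_. p) T)" unfolding rev by simp
  qed
  have half: "1 - F x \<le> F x" using Fx v by simp
  have rx: "x * (1 - F x) = x / real n" using Fx unfolding v_def by simp
  show "(SUP p'\<in>{p'. \<forall>i<n. p' i > 0}. SUP T\<in>equilibria n F p'. ereal (revenue n F p' T))
          \<le> ereal (3 * x)"
  proof (intro SUP_least)
    fix p' T assume T: "T \<in> equilibria n F p'"
    define q where "q i = Fe F (T i)" for i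
    have q: "0 \<le> q i \<and> q i \<le> 1" for i unfolding q_def using q01 by auto
    define D where "D i = (\<Prod>j\<in>{..<n}-{i}. q j)" for i
    have D: "0 \<le> D i \<and> D i \<le> 1" for i unfolding D_def
      by (intro conjI prod_nonneg prod_le_1) (use q in blast)+
    have tm: "p' i * (1 - q i) \<le> x * ((1 - q i) * D i) + 2 * x / real n" if i: "i < n" for i
    proof -
      have eqT: "T i = (let d = (\<Prod>j\<in>nbrs n i. Fe F (T j)) in if d = 0 then \<infinity> else ereal (p' i / d))"
        using T i unfolding equilibria_def by blast
      have "(\<Prod>j\<in>nbrs n i. Fe F (T j)) = D i" unfolding D_def q_def nbrs_eq ..
      then have Ti: "T i = (if D i = 0 then \<infinity> else ereal (p' i / D i))"
        using eqT unfolding Let_def by simp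
      have R0: "0 \<le> x * ((1 - q i) * D i)" using x0 q D by simp
      have R1: "0 \<le> 2 * x / real n" using x0 n0 by simp
      show ?thesis
      proof (cases "D i = 0")
        case True
        then have "q i = 1" unfolding q_def Ti Fe_def by simp
        then show ?thesis using R0 R1 by simp
      next
        case False
        define t where "t = p' i / D i"
        have qi: "q i = F t" unfolding q_def Ti t_def using False by (simp add: Fe_def)
        have pi: "p' i = t * D i" unfolding t_def using False by simp
        have Ft: "0 \<le> 1 - F t" using le1 by simp
        show ?thesis
        proof (cases "t \<le> x")
          case True
          have "p' i * (1 - q i) = t * ((1 - F t) * D i)" unfolding pi qi by simp
          also have "\<dots> \<le> x * ((1 - F t) * D i)" using True Ft D by (intro mult_right_mono) auto
          finally show ?thesis using R1 qi by simp
        next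
          case False
          have tb: "t * (1 - F t) \<le> 2 * (x * (1 - F x))"
            by (rule rev_bound[OF mono cont a0 Fa Fb le1 der vv ax xb half]) (use False in simp)
          have "0 \<le> t * (1 - F t)" using False x0 Ft by simp
          then have "p' i * (1 - q i) = D i * (t * (1 - F t))" "D i * (t * (1 - F t)) \<le> t * (1 - F t)"
            unfolding pi qi using D by (auto simp: mult_left_le_one_le)
          then show ?thesis using tb rx R0 by simp
        qed
      qed
    qed
    have "revenue n F p' T = (\<Sum>i<n. p' i * (1 - q i))" unfolding revenue_def q_def by simp
    also have "\<dots> \<le> (\<Sum>i<n. x * ((1 - q i) * D i) + 2 * x / real n)" by (intro sum_mono tm) simp
    also have "\<dots> = x * (\<Sum>i<n. (1 - q i) * D i) + 2 * x"
      using n0 by (simp add: sum.distrib sum_distrib_left)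
    also have "\<dots> \<le> x * 1 + 2 * x"
    proof -
      have "(\<Sum>i<n. (1 - q i) * D i) \<le> 1 - (\<Prod>i<n. q i)"
        unfolding D_def by (rule excl) (use q in auto)
      moreover have "0 \<le> (\<Prod>i<n. q i)" using q by (intro prod_nonneg) auto
      ultimately show ?thesis using x0 by (simp add: mult_left_mono)
    qed
    finally show "ereal (revenue n F p' T) \<le> ereal (3 * x)" by simp
  qed
qed

theorem theorem3p1:
  "\<exists>c::real. c > 0 \<and>
    (\<forall>n::nat. \<forall>F::real \<Rightarrow> real. n \<ge> 2 \<and> regular F \<longrightarrow>
      (let p = Finv F (1 - 1 / real n) * (1 - 1 / real n) ^ (n - 1) in
        (INF T\<in>equilibria n F (\<lambda>_. p). ereal (revenue n F (\<lambda>_. p) T))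
          \<ge> ereal c * (SUP p'\<in>{p'. \<forall>i<n. p' i > 0}.
                          SUP T\<in>equilibria n F p'. ereal (revenue n F p' T))))"
proof (intro exI[of _ "1/18"] conjI allI impI)
  fix n :: nat and F :: "real \<Rightarrow> real"
  assume h: "n \<ge> 2 \<and> regular F"
  define x where "x = Finv F (1 - 1 / real n)"
  define k where "k = (1 - 1 / real n) ^ (n - 1)"
  note mb = main_bound[of n F, OF conjunct1[OF h] conjunct2[OF h], folded x_def k_def]
  have k: "1/3 \<le> k" using factor_bounds[OF conjunct1[OF h]] unfolding k_def by auto
  have "ereal (1/18) * (SUP p'\<in>{p'. \<forall>i<n. p' i > 0}. SUP T\<in>equilibria n F p'. ereal (revenue n F p' T))
      \<le> ereal (1/18) * ereal (3 * x)" by (rule ereal_mult_left_mono[OF mb(2)]) simp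
  also have "\<dots> = ereal (x / 6)" by simp
  also have "\<dots> \<le> ereal (x * k / 2)" using k mb(3) by (simp add: field_simps)
  also have "\<dots> \<le> (INF T\<in>equilibria n F (\<lambda>_. x * k). ereal (revenue n F (\<lambda>_. x * k) T))"
    by (rule mb(1))
  finally show "(let p = Finv F (1 - 1 / real n) * (1 - 1 / real n) ^ (n - 1) in
        (INF T\<in>equilibria n F (\<lambda>_. p). ereal (revenue n F (\<lambda>_. p) T))
          \<ge> ereal (1/18) * (SUP p'\<in>{p'. \<forall>i<n. p' i > 0}.
                          SUP T\<in>equilibria n F p'. ereal (revenue n F p' T)))"
    unfolding x_def[symmetric] k_def[symmetric] Let_def .
qed simp

end
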